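(* In the planar algebra $\mathcal P$ described in the context: (i) $P_4S=SP_4=-2P_4$; (ii) $Q_4S=SQ_4=3Q_4$; (iii) $P_5(S\otimes X)=(S\otimes X)P_5=-2P_5$; (iv) $P_6(S\otimes X^{\otimes2})=(S\otimes X^{\otimes2})P_6=-2P_6$.
   Context: $\mathcal P$ is the unshaded planar algebra generated by a self-adjoint $S\in\mathcal P_4$ modulo: (i) a closed loop equals $2$; (ii) $S$ is uncuppable, uncappable and unsidecappable; (iii) $S^2=6f^{(4)}+S$; (iv) jellyfish relation: the rainbowed $S$ with an extra strand above it equals the same with the strand passing below the box, crossing over its 8 strands; crossings defined by crossing $=i\cdot(\text{A-smoothing})-i\cdot(\text{B-smoothing})$. Multiplication is vertical stacking, $\otimes$ horizontal juxtaposition, $X$ a single strand, $e_k$ the Temperley–Lieb diagram with a cap and cup at positions $k,k+1$. Jones–Wenzl: $f^{(1)}=X$, $f^{(k+1)}=f^{(k)}\otimes X-\frac{k}{k+1}(f^{(k)}\otimes X)e_k(f^{(k)}\otimes X)$. $P_4=\frac35f^{(4)}-\frac15S$, $Q_4=\frac25f^{(4)}+\frac15S$, $P_5=P_4\otimes X-\frac43(P_4\otimes X)e_4(P_4\otimes X)$, $P_6=P_5\otimes X-\frac32(P_5\otimes X)e_5(P_5\otimes X)$. *)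

theory Defs
  imports Complex_Main
begin

text \<open>
  An unshaded planar algebra with loop value 2 is encoded as a strict pivotal
  (complex-linear, dagger) category generated by one symmetrically self-dual object
  (a single strand).  The morphisms of all hom-spaces live in one abelian group 'm,
  with complex scalar multiplication pa_scale A (a complex-linear structure on each hom-space); membership in the hom-space from m bottom strands to n top strands is
  given by pa_hom A m n.  pa_mul A a b is vertical stacking (a drawn on top of b),
  pa_tens A a b is horizontal juxtaposition (a to the left of b).
\<close>

record 'm pa_ops =
  pa_hom  :: "nat \<Rightarrow> nat \<Rightarrow> 'm set"
  pa_mul  :: "'m \<Rightarrow> 'm \<Rightarrow> 'm"
  pa_tens :: "'m \<Rightarrow> 'm \<Rightarrow> 'm"
  pa_id   :: "nat \<Rightarrow> 'm"
  pa_cap  :: "'m"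
  pa_cup  :: "'m"
  pa_star :: "'m \<Rightarrow> 'm"
  pa_scale :: "complex \<Rightarrow> 'm \<Rightarrow> 'm"

definition X :: "'m pa_ops \<Rightarrow> 'm" where
  "X A = pa_id A 1"

definition e :: "'m pa_ops \<Rightarrow> nat \<Rightarrow> nat \<Rightarrow> 'm" where
  "e A n k = pa_tens A (pa_tens A (pa_id A (k - 1)) (pa_mul A (pa_cup A) (pa_cap A)))
                       (pa_id A (n - k - 1))"

text \<open>Jones--Wenzl idempotents (jw A 0 is an unused convention).\<close>
fun jw :: "'m::ab_group_add pa_ops \<Rightarrow> nat \<Rightarrow> 'm" where
  "jw A 0 = pa_id A 0"
| "jw A (Suc 0) = X A"
| "jw A (Suc (Suc k)) =
     pa_tens A (jw A (Suc k)) (X A)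
     - pa_scale A (of_nat (Suc k) / of_nat (Suc (Suc k)))
         (pa_mul A (pa_mul A (pa_tens A (jw A (Suc k)) (X A)) (e A (Suc (Suc k)) (Suc k)))
                  (pa_tens A (jw A (Suc k)) (X A)))"

text \<open>Crossing = i (A-smoothing) - i (B-smoothing); A-smoothing taken to be the
  vertical identity smoothing, B-smoothing the cup-cap smoothing.\<close>
definition crossing :: "'m::ab_group_add pa_ops \<Rightarrow> 'm" where
  "crossing A = pa_scale A \<i> (pa_id A 2) - pa_scale A \<i> (pa_mul A (pa_cup A) (pa_cap A))"

fun cups :: "'m pa_ops \<Rightarrow> nat \<Rightarrow> 'm" where
  "cups A 0 = pa_id A 0"
| "cups A (Suc n) = pa_mul A (pa_tens A (pa_tens A (X A) (cups A n)) (X A)) (pa_cup A)"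

text \<open>A strand entering at the right of n strands crosses over all of them to the left.\<close>
fun braid_left :: "'m::ab_group_add pa_ops \<Rightarrow> nat \<Rightarrow> 'm" where
  "braid_left A 0 = pa_id A 1"
| "braid_left A (Suc n) =
     pa_mul A (pa_tens A (braid_left A n) (X A)) (pa_tens A (pa_id A n) (crossing A))"

text \<open>Rainbowed S: bottom legs bent up, all 8 endpoints on top (hom 0 8).\<close>
definition rainbow :: "'m pa_ops \<Rightarrow> 'm \<Rightarrow> 'm" where
  "rainbow A S = pa_mul A (pa_tens A S (pa_id A 4)) (cups A 4)"

locale tl_pivotal =
  fixes A :: "'m::ab_group_add pa_ops"
  assumes hom_add: "\<And>a b m n. a \<in> pa_hom A m n \<Longrightarrow> b \<in> pa_hom A m n \<Longrightarrow> a + b \<in> pa_hom A m n"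
    and hom_scale: "\<And>a c m n. a \<in> pa_hom A m n \<Longrightarrow> pa_scale A c a \<in> pa_hom A m n"
    and scale_add_left: "\<And>a r s m n. a \<in> pa_hom A m n \<Longrightarrow> pa_scale A (r + s) a = pa_scale A r a + pa_scale A s a"
    and scale_add_right: "\<And>a b r m n. a \<in> pa_hom A m n \<Longrightarrow> b \<in> pa_hom A m n \<Longrightarrow> pa_scale A r (a + b) = pa_scale A r a + pa_scale A r b"
    and scale_mult: "\<And>a r s m n. a \<in> pa_hom A m n \<Longrightarrow> pa_scale A (r * s) a = pa_scale A r (pa_scale A s a)"
    and scale_one: "\<And>a m n. a \<in> pa_hom A m n \<Longrightarrow> pa_scale A 1 a = a"
    and mul_hom: "\<And>a b m n k. a \<in> pa_hom A n k \<Longrightarrow> b \<in> pa_hom A m n \<Longrightarrow> pa_mul A a b \<in> pa_hom A m k"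
    and tens_hom: "\<And>a b m n p q. a \<in> pa_hom A m n \<Longrightarrow> b \<in> pa_hom A p q \<Longrightarrow>
                     pa_tens A a b \<in> pa_hom A (m + p) (n + q)"
    and id_hom: "\<And>n. pa_id A n \<in> pa_hom A n n"
    and mul_assoc: "\<And>a b c m n k l. a \<in> pa_hom A k l \<Longrightarrow> b \<in> pa_hom A n k \<Longrightarrow> c \<in> pa_hom A m n \<Longrightarrow>
                     pa_mul A (pa_mul A a b) c = pa_mul A a (pa_mul A b c)"
    and id_left: "\<And>a m n. a \<in> pa_hom A m n \<Longrightarrow> pa_mul A (pa_id A n) a = a"
    and id_right: "\<And>a m n. a \<in> pa_hom A m n \<Longrightarrow> pa_mul A a (pa_id A m) = a"
    and mul_add_left: "\<And>a b c m n k. a \<in> pa_hom A n k \<Longrightarrow> b \<in> pa_hom A n k \<Longrightarrow> c \<in> pa_hom A m n \<Longrightarrow>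
                     pa_mul A (a + b) c = pa_mul A a c + pa_mul A b c"
    and mul_add_right: "\<And>a b c m n k. a \<in> pa_hom A n k \<Longrightarrow> b \<in> pa_hom A m n \<Longrightarrow> c \<in> pa_hom A m n \<Longrightarrow>
                     pa_mul A a (b + c) = pa_mul A a b + pa_mul A a c"
    and mul_scale_left: "\<And>a b r m n k. a \<in> pa_hom A n k \<Longrightarrow> b \<in> pa_hom A m n \<Longrightarrow>
                     pa_mul A (pa_scale A r a) b = pa_scale A r (pa_mul A a b)"
    and mul_scale_right: "\<And>a b r m n k. a \<in> pa_hom A n k \<Longrightarrow> b \<in> pa_hom A m n \<Longrightarrow>
                     pa_mul A a (pa_scale A r b) = pa_scale A r (pa_mul A a b)"
    and tens_add_left: "\<And>a b c m n p q. a \<in> pa_hom A m n \<Longrightarrow> b \<in> pa_hom A m n \<Longrightarrow> c \<in> pa_hom A p q \<Longrightarrow>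
                     pa_tens A (a + b) c = pa_tens A a c + pa_tens A b c"
    and tens_add_right: "\<And>a b c m n p q. a \<in> pa_hom A m n \<Longrightarrow> b \<in> pa_hom A p q \<Longrightarrow> c \<in> pa_hom A p q \<Longrightarrow>
                     pa_tens A a (b + c) = pa_tens A a b + pa_tens A a c"
    and tens_scale_left: "\<And>a b r m n p q. a \<in> pa_hom A m n \<Longrightarrow> b \<in> pa_hom A p q \<Longrightarrow>
                     pa_tens A (pa_scale A r a) b = pa_scale A r (pa_tens A a b)"
    and tens_scale_right: "\<And>a b r m n p q. a \<in> pa_hom A m n \<Longrightarrow> b \<in> pa_hom A p q \<Longrightarrow>
                     pa_tens A a (pa_scale A r b) = pa_scale A r (pa_tens A a b)"
    and tens_assoc: "\<And>a b c m n p q s t. a \<in> pa_hom A m n \<Longrightarrow> b \<in> pa_hom A p q \<Longrightarrow> c \<in> pa_hom A s t \<Longrightarrow>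
                     pa_tens A (pa_tens A a b) c = pa_tens A a (pa_tens A b c)"
    and tens_unit_left: "\<And>a m n. a \<in> pa_hom A m n \<Longrightarrow> pa_tens A (pa_id A 0) a = a"
    and tens_unit_right: "\<And>a m n. a \<in> pa_hom A m n \<Longrightarrow> pa_tens A a (pa_id A 0) = a"
    and tens_id: "\<And>m n. pa_tens A (pa_id A m) (pa_id A n) = pa_id A (m + n)"
    and interchange: "\<And>a b c d m n k p q l.
                     a \<in> pa_hom A n k \<Longrightarrow> c \<in> pa_hom A m n \<Longrightarrow> b \<in> pa_hom A q l \<Longrightarrow> d \<in> pa_hom A p q \<Longrightarrow>
                     pa_mul A (pa_tens A a b) (pa_tens A c d) = pa_tens A (pa_mul A a c) (pa_mul A b d)"
    and cap_hom: "pa_cap A \<in> pa_hom A 2 0"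
    and cup_hom: "pa_cup A \<in> pa_hom A 0 2"
    and zigzag1: "pa_mul A (pa_tens A (pa_cap A) (X A)) (pa_tens A (X A) (pa_cup A)) = X A"
    and zigzag2: "pa_mul A (pa_tens A (X A) (pa_cap A)) (pa_tens A (pa_cup A) (X A)) = X A"
    and loop: "pa_mul A (pa_cap A) (pa_cup A) = pa_scale A 2 (pa_id A 0)"
    and star_hom: "\<And>a m n. a \<in> pa_hom A m n \<Longrightarrow> pa_star A a \<in> pa_hom A n m"
    and star_star: "\<And>a m n. a \<in> pa_hom A m n \<Longrightarrow> pa_star A (pa_star A a) = a"
    and star_add: "\<And>a b m n. a \<in> pa_hom A m n \<Longrightarrow> b \<in> pa_hom A m n \<Longrightarrow>
                     pa_star A (a + b) = pa_star A a + pa_star A b"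
    and star_scale: "\<And>a r m n. a \<in> pa_hom A m n \<Longrightarrow> pa_star A (pa_scale A r a) = pa_scale A (cnj r) (pa_star A a)"
    and star_mul: "\<And>a b m n k. a \<in> pa_hom A n k \<Longrightarrow> b \<in> pa_hom A m n \<Longrightarrow>
                     pa_star A (pa_mul A a b) = pa_mul A (pa_star A b) (pa_star A a)"
    and star_tens: "\<And>a b m n p q. a \<in> pa_hom A m n \<Longrightarrow> b \<in> pa_hom A p q \<Longrightarrow>
                     pa_star A (pa_tens A a b) = pa_tens A (pa_star A a) (pa_star A b)"
    and star_id: "\<And>n. pa_star A (pa_id A n) = pa_id A n"
    and star_cap: "pa_star A (pa_cap A) = pa_cup A"

locale planar_S = tl_pivotal A for A :: "'m::ab_group_add pa_ops" +
  fixes S :: 'm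
  assumes S_hom: "S \<in> pa_hom A 4 4"
    and S_selfadj: "pa_star A S = S"
    and S_uncappable: "\<And>j. j \<le> 2 \<Longrightarrow>
          pa_mul A (pa_tens A (pa_tens A (pa_id A j) (pa_cap A)) (pa_id A (2 - j))) S = 0"
    and S_uncuppable: "\<And>j. j \<le> 2 \<Longrightarrow>
          pa_mul A S (pa_tens A (pa_tens A (pa_id A j) (pa_cup A)) (pa_id A (2 - j))) = 0"
    and S_sidecap_left: "pa_mul A (pa_mul A (pa_tens A (pa_cap A) (pa_id A 3)) (pa_tens A (X A) S))
                           (pa_tens A (pa_cup A) (pa_id A 3)) = 0"
    and S_sidecap_right: "pa_mul A (pa_mul A (pa_tens A (pa_id A 3) (pa_cap A)) (pa_tens A S (X A)))
                           (pa_tens A (pa_id A 3) (pa_cup A)) = 0"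
    and S_square: "pa_mul A S S = pa_scale A 6 (jw A 4) + S"
    and jellyfish: "pa_tens A (X A) (rainbow A S) = pa_mul A (braid_left A 8) (pa_tens A (rainbow A S) (X A))"

definition P4 :: "'m::ab_group_add pa_ops \<Rightarrow> 'm \<Rightarrow> 'm" where
  "P4 A S = pa_scale A (3/5) (jw A 4) - pa_scale A (1/5) S"

definition Q4 :: "'m::ab_group_add pa_ops \<Rightarrow> 'm \<Rightarrow> 'm" where
  "Q4 A S = pa_scale A (2/5) (jw A 4) + pa_scale A (1/5) S"

definition P5 :: "'m::ab_group_add pa_ops \<Rightarrow> 'm \<Rightarrow> 'm" where
  "P5 A S = pa_tens A (P4 A S) (X A)
     - pa_scale A (4/3) (pa_mul A (pa_mul A (pa_tens A (P4 A S) (X A)) (e A 5 4)) (pa_tens A (P4 A S) (X A)))"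

definition P6 :: "'m::ab_group_add pa_ops \<Rightarrow> 'm \<Rightarrow> 'm" where
  "P6 A S = pa_tens A (P5 A S) (X A)
     - pa_scale A (3/2) (pa_mul A (pa_mul A (pa_tens A (P5 A S) (X A)) (e A 6 5)) (pa_tens A (P5 A S) (X A)))"

end

theory Submission
  imports Defs
begin


context planar_S begin

lemma X_hom: "X A \<in> pa_hom A 1 1" unfolding X_def by (rule id_hom)

lemma hom_eq: "a \<in> pa_hom A m n \<Longrightarrow> m = m' \<Longrightarrow> n = n' \<Longrightarrow> a \<in> pa_hom A m' n'" by simp

lemma scale_zero: assumes a: "a \<in> pa_hom A m n" shows "pa_scale A 0 a = 0"
proof -
  have "pa_scale A (0+0) a = pa_scale A 0 a + pa_scale A 0 a" by (rule scale_add_left[OF a])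
  then show ?thesis by simp
qed

lemma scale_neg1: assumes a: "a \<in> pa_hom A m n" shows "pa_scale A (-1) a = - a"
proof -
  have "pa_scale A (1 + -1) a = pa_scale A 1 a + pa_scale A (-1) a" by (rule scale_add_left[OF a])
  then have "0 = a + pa_scale A (-1) a" using scale_zero[OF a] scale_one[OF a] by simp
  then show ?thesis by (metis add.commute add_eq_0_iff2 minus_unique)
qed

lemma neg_hom: "a \<in> pa_hom A m n \<Longrightarrow> - a \<in> pa_hom A m n"
  by (metis scale_neg1 hom_scale)

lemma diff_hom: "a \<in> pa_hom A m n \<Longrightarrow> b \<in> pa_hom A m n \<Longrightarrow> a - b \<in> pa_hom A m n"
  by (metis diff_conv_add_uminus neg_hom hom_add)

lemma zero_hom: "a \<in> pa_hom A m n \<Longrightarrow> 0 \<in> pa_hom A m n"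
  by (metis scale_zero hom_scale)

lemma scale_scale: "a \<in> pa_hom A m n \<Longrightarrow> pa_scale A r (pa_scale A s a) = pa_scale A (r*s) a"
  by (simp add: scale_mult)

lemma scale_comm: "a \<in> pa_hom A m n \<Longrightarrow> pa_scale A r (pa_scale A s a) = pa_scale A s (pa_scale A r a)"
  by (metis scale_mult mult.commute)

lemma scale_neg: assumes a: "a \<in> pa_hom A m n" shows "pa_scale A r (- a) = - pa_scale A r a"
proof -
  have "pa_scale A r (pa_scale A (-1) a) = pa_scale A (-1) (pa_scale A r a)" by (rule scale_comm[OF a])
  then show ?thesis using scale_neg1[OF a] scale_neg1[OF hom_scale[OF a]] by simp
qed

lemma scale_diff_right: assumes a: "a \<in> pa_hom A m n" and b: "b \<in> pa_hom A m n"
  shows "pa_scale A r (a - b) = pa_scale A r a - pa_scale A r b"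
proof -
  have "pa_scale A r (a + - b) = pa_scale A r a + pa_scale A r (- b)" by (rule scale_add_right[OF a neg_hom[OF b]])
  then show ?thesis using scale_neg[OF b] by simp
qed

lemma scale_diff_left: assumes a: "a \<in> pa_hom A m n"
  shows "pa_scale A (r - s) a = pa_scale A r a - pa_scale A s a"
proof -
  have 1: "pa_scale A (r + (-1)*s) a = pa_scale A r a + pa_scale A ((-1)*s) a" by (rule scale_add_left[OF a])
  have 2: "pa_scale A ((-1)*s) a = pa_scale A (-1) (pa_scale A s a)" by (rule scale_mult[OF a])
  have 3: "pa_scale A (-1) (pa_scale A s a) = - pa_scale A s a" by (rule scale_neg1[OF hom_scale[OF a]])
  have "r + (-1)*s = r - s" by simp
  then show ?thesis using 1 2 3 by simp
qed

lemma scale_zero_right: assumes z: "(0::'m) \<in> pa_hom A m n" shows "pa_scale A c 0 = 0"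
proof -
  have 1: "pa_scale A (c*0) 0 = pa_scale A c (pa_scale A 0 0)" by (rule scale_mult[OF z])
  have 2: "pa_scale A 0 0 = 0" by (rule scale_zero[OF z])
  from 1 2 show ?thesis by simp
qed

lemma mul_neg_left: assumes a: "a \<in> pa_hom A n k" and b: "b \<in> pa_hom A m n"
  shows "pa_mul A (- a) b = - pa_mul A a b"
proof -
  have "pa_mul A (pa_scale A (-1) a) b = pa_scale A (-1) (pa_mul A a b)" by (rule mul_scale_left[OF a b])
  then show ?thesis using scale_neg1[OF a] scale_neg1[OF mul_hom[OF a b]] by simp
qed

lemma mul_neg_right: assumes a: "a \<in> pa_hom A n k" and b: "b \<in> pa_hom A m n"
  shows "pa_mul A a (- b) = - pa_mul A a b"
proof -
  have "pa_mul A a (pa_scale A (-1) b) = pa_scale A (-1) (pa_mul A a b)" by (rule mul_scale_right[OF a b])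
  then show ?thesis using scale_neg1[OF b] scale_neg1[OF mul_hom[OF a b]] by simp
qed

lemma mul_diff_left: assumes a: "a \<in> pa_hom A n k" and a2: "a2 \<in> pa_hom A n k" and b: "b \<in> pa_hom A m n"
  shows "pa_mul A (a - a2) b = pa_mul A a b - pa_mul A a2 b"
proof -
  have "pa_mul A (a + - a2) b = pa_mul A a b + pa_mul A (- a2) b" by (rule mul_add_left[OF a neg_hom[OF a2] b])
  then show ?thesis using mul_neg_left[OF a2 b] by simp
qed

lemma mul_diff_right: assumes a: "a \<in> pa_hom A n k" and b: "b \<in> pa_hom A m n" and b2: "b2 \<in> pa_hom A m n"
  shows "pa_mul A a (b - b2) = pa_mul A a b - pa_mul A a b2"
proof -
  have "pa_mul A a (b + - b2) = pa_mul A a b + pa_mul A a (- b2)" by (rule mul_add_right[OF a b neg_hom[OF b2]])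
  then show ?thesis using mul_neg_right[OF a b2] by simp
qed

lemma tens_diff_left: assumes a: "a \<in> pa_hom A m n" and a2: "a2 \<in> pa_hom A m n" and b: "b \<in> pa_hom A p q"
  shows "pa_tens A (a - a2) b = pa_tens A a b - pa_tens A a2 b"
proof -
  have 1: "pa_tens A (pa_scale A (-1) a2) b = pa_scale A (-1) (pa_tens A a2 b)" by (rule tens_scale_left[OF a2 b])
  have 2: "pa_tens A (- a2) b = - pa_tens A a2 b"
    using 1 scale_neg1[OF a2] scale_neg1[OF tens_hom[OF a2 b]] by simp
  have "pa_tens A (a + - a2) b = pa_tens A a b + pa_tens A (- a2) b" by (rule tens_add_left[OF a neg_hom[OF a2] b])
  then show ?thesis using 2 by simp
qed

lemma mul_zero_r: assumes a: "a \<in> pa_hom A n k" and z: "(0::'m) \<in> pa_hom A m n" shows "pa_mul A a 0 = 0"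
proof -
  have "pa_mul A a (pa_scale A 0 0) = pa_scale A 0 (pa_mul A a 0)" by (rule mul_scale_right[OF a z])
  then show ?thesis using scale_zero[OF z] scale_zero[OF mul_hom[OF a z]] by simp
qed

lemma mul_zero_l: assumes z: "(0::'m) \<in> pa_hom A n k" and b: "b \<in> pa_hom A m n" shows "pa_mul A 0 b = 0"
proof -
  have "pa_mul A (pa_scale A 0 0) b = pa_scale A 0 (pa_mul A 0 b)" by (rule mul_scale_left[OF z b])
  then show ?thesis using scale_zero[OF z] scale_zero[OF mul_hom[OF z b]] by simp
qed

lemma cupcap_hom: "pa_mul A (pa_cup A) (pa_cap A) \<in> pa_hom A 2 2"
  by (rule mul_hom[OF cup_hom cap_hom])

lemma e_hom: assumes "1 \<le> k" "k < n" shows "e A n k \<in> pa_hom A n n"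
proof -
  have "k - 1 + 2 + (n - k - 1) = n" using assms by arith
  then show ?thesis unfolding e_def
    using tens_hom[OF tens_hom[OF id_hom cupcap_hom] id_hom, of "k-1" "n-k-1"] by simp
qed

lemma jw_hom: "jw A n \<in> pa_hom A n n"
proof (induction n rule: nat_less_induct)
  case (1 n)
  show ?case
  proof (cases n)
    case 0 then show ?thesis by (simp add: id_hom)
  next
    case (Suc k) note nk = Suc
    show ?thesis
    proof (cases k)
      case 0 then show ?thesis using nk X_hom by simp
    next
      case (Suc j)
      have J: "jw A (Suc j) \<in> pa_hom A (Suc j) (Suc j)" using 1 nk Suc by simp
      have T: "pa_tens A (jw A (Suc j)) (X A) \<in> pa_hom A (Suc (Suc j)) (Suc (Suc j))"
        using tens_hom[OF J X_hom] by simp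
      have E: "e A (Suc (Suc j)) (Suc j) \<in> pa_hom A (Suc (Suc j)) (Suc (Suc j))" by (rule e_hom) auto
      have "jw A (Suc (Suc j)) \<in> pa_hom A (Suc (Suc j)) (Suc (Suc j))"
        unfolding jw.simps by (rule diff_hom[OF T hom_scale[OF mul_hom[OF mul_hom[OF T E] T]]])
      then show ?thesis using nk Suc by simp
    qed
  qed
qed

end


context planar_S begin

lemma jw_step:
  assumes j: "j \<le> 2"
  and IH: "pa_mul A (pa_tens A (jw A (Suc j)) (pa_id A (3-j))) S = S"
  and IH2: "pa_mul A S (pa_tens A (jw A (Suc j)) (pa_id A (3-j))) = S"
  shows "pa_mul A (pa_tens A (jw A (Suc (Suc j))) (pa_id A (2-j))) S = S \<and>
         pa_mul A S (pa_tens A (jw A (Suc (Suc j))) (pa_id A (2-j))) = S"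
proof -
  define J where "J = jw A (Suc j)"
  define T where "T = pa_tens A J (X A)"
  define E where "E = e A (Suc (Suc j)) (Suc j)"
  define I where "I = pa_id A (2-j)"
  define c :: complex where "c = of_nat (Suc j) / of_nat (Suc (Suc j))"
  define M where "M = pa_mul A (pa_mul A T E) T"
  define T' where "T' = pa_tens A J (pa_id A (3-j))"
  define E' where "E' = pa_tens A E I"
  define Cu where "Cu = pa_tens A (pa_tens A (pa_id A j) (pa_cup A)) I"
  define Ca where "Ca = pa_tens A (pa_tens A (pa_id A j) (pa_cap A)) I"
  define N where "N = pa_mul A (pa_mul A T' E') T'"
  have Jh: "J \<in> pa_hom A (Suc j) (Suc j)" unfolding J_def by (rule jw_hom)
  have Th: "T \<in> pa_hom A (Suc (Suc j)) (Suc (Suc j))" unfolding T_def using tens_hom[OF Jh X_hom] by simp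
  have Eh: "E \<in> pa_hom A (Suc (Suc j)) (Suc (Suc j))" unfolding E_def by (rule e_hom) auto
  have Ih: "I \<in> pa_hom A (2-j) (2-j)" unfolding I_def by (rule id_hom)
  have II: "pa_mul A I I = I" unfolding I_def by (rule id_left[OF id_hom])
  have Mh: "M \<in> pa_hom A (Suc (Suc j)) (Suc (Suc j))" unfolding M_def by (rule mul_hom[OF mul_hom[OF Th Eh] Th])
  have T'h: "T' \<in> pa_hom A 4 4" unfolding T'_def using tens_hom[OF Jh id_hom, of "3-j"] j by simp
  have E'h: "E' \<in> pa_hom A 4 4" unfolding E'_def using tens_hom[OF Eh Ih] j by simp
  have Cuh: "Cu \<in> pa_hom A 2 4" unfolding Cu_def
    using tens_hom[OF tens_hom[OF id_hom cup_hom] Ih, of j] j by simp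
  have Cah: "Ca \<in> pa_hom A 4 2" unfolding Ca_def
    using tens_hom[OF tens_hom[OF id_hom cap_hom] Ih, of j] j by simp
  have Nh: "N \<in> pa_hom A 4 4" unfolding N_def by (rule mul_hom[OF mul_hom[OF T'h E'h] T'h])
  have TI: "pa_tens A T I = T'"
  proof -
    have "pa_tens A T I = pa_tens A J (pa_tens A (X A) I)" unfolding T_def
      by (rule tens_assoc[OF Jh X_hom Ih])
    also have "pa_tens A (X A) I = pa_id A (3-j)" proof -
      have "1 + (2 - j) = 3 - j" using j by arith
      then show ?thesis unfolding X_def I_def tens_id by simp
    qed
    finally show ?thesis unfolding T'_def .
  qed
  have Esimp: "E = pa_tens A (pa_id A j) (pa_mul A (pa_cup A) (pa_cap A))"
  proof -
    have "E = pa_tens A (pa_tens A (pa_id A j) (pa_mul A (pa_cup A) (pa_cap A))) (pa_id A 0)"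
      unfolding E_def e_def by simp
    then show ?thesis using tens_unit_right[OF tens_hom[OF id_hom cupcap_hom, of j]] by simp
  qed
  have E'CC: "E' = pa_mul A Cu Ca"
  proof -
    have 1: "pa_mul A (pa_tens A (pa_id A j) (pa_cup A)) (pa_tens A (pa_id A j) (pa_cap A))
           = pa_tens A (pa_id A j) (pa_mul A (pa_cup A) (pa_cap A))"
      using interchange[OF id_hom id_hom cup_hom cap_hom, of j] id_left[OF id_hom, of j] by simp
    have 2: "pa_mul A Cu Ca = pa_tens A (pa_mul A (pa_tens A (pa_id A j) (pa_cup A)) (pa_tens A (pa_id A j) (pa_cap A))) (pa_mul A I I)"
      unfolding Cu_def Ca_def
      by (rule interchange[OF tens_hom[OF id_hom cup_hom] tens_hom[OF id_hom cap_hom] Ih Ih])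
    show ?thesis unfolding E'_def Esimp using 1 2 II by simp
  qed
  have CaS: "pa_mul A Ca S = 0" unfolding Ca_def I_def using S_uncappable[OF j] .
  have SCu: "pa_mul A S Cu = 0" unfolding Cu_def I_def using S_uncuppable[OF j] .
  have z42: "(0::'m) \<in> pa_hom A 4 2" using mul_hom[OF Cah S_hom] CaS by simp
  have z24: "(0::'m) \<in> pa_hom A 2 4" using mul_hom[OF S_hom Cuh] SCu by simp
  have z44: "(0::'m) \<in> pa_hom A 4 4" using zero_hom[OF S_hom] .
  have E'S: "pa_mul A E' S = 0"
    unfolding E'CC mul_assoc[OF Cuh Cah S_hom] CaS using mul_zero_r[OF Cuh z42] .
  have SE': "pa_mul A S E' = 0"
    unfolding E'CC mul_assoc[OF S_hom Cuh Cah, symmetric] SCu using mul_zero_l[OF z24 Cah] .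
  have MI: "pa_tens A M I = N"
  proof -
    have 1: "pa_mul A (pa_tens A (pa_mul A T E) I) (pa_tens A T I) = pa_tens A M (pa_mul A I I)"
      unfolding M_def by (rule interchange[OF mul_hom[OF Th Eh] Th Ih Ih])
    have 2: "pa_mul A (pa_tens A T I) (pa_tens A E I) = pa_tens A (pa_mul A T E) (pa_mul A I I)"
      by (rule interchange[OF Th Eh Ih Ih])
    show ?thesis using 1 2 II unfolding N_def TI E'_def by simp
  qed
  have jwe: "jw A (Suc (Suc j)) = T - pa_scale A c M"
    unfolding T_def M_def c_def J_def E_def by (simp only: jw.simps)
  have main: "pa_tens A (jw A (Suc (Suc j))) I = T' - pa_scale A c N"
    unfolding jwe tens_diff_left[OF Th hom_scale[OF Mh] Ih] tens_scale_left[OF Mh Ih] TI MI ..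
  have IH': "pa_mul A T' S = S" "pa_mul A S T' = S" using IH IH2 unfolding T'_def J_def by auto
  have NS: "pa_mul A N S = 0"
  proof -
    have "pa_mul A N S = pa_mul A (pa_mul A T' E') (pa_mul A T' S)"
      unfolding N_def by (rule mul_assoc[OF mul_hom[OF T'h E'h] T'h S_hom])
    also have "\<dots> = pa_mul A T' (pa_mul A E' S)" unfolding IH' by (rule mul_assoc[OF T'h E'h S_hom])
    also have "\<dots> = 0" unfolding E'S by (rule mul_zero_r[OF T'h z44])
    finally show ?thesis .
  qed
  have SN: "pa_mul A S N = 0"
  proof -
    have "pa_mul A S N = pa_mul A (pa_mul A S (pa_mul A T' E')) T'"
      unfolding N_def by (rule mul_assoc[OF S_hom mul_hom[OF T'h E'h] T'h, symmetric])
    also have "pa_mul A S (pa_mul A T' E') = pa_mul A (pa_mul A S T') E'"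
      by (rule mul_assoc[OF S_hom T'h E'h, symmetric])
    also have "\<dots> = 0" unfolding IH' SE' ..
    also have "pa_mul A 0 T' = 0" by (rule mul_zero_l[OF z44 T'h])
    finally show ?thesis .
  qed
  have L: "pa_mul A (T' - pa_scale A c N) S = S"
    unfolding mul_diff_left[OF T'h hom_scale[OF Nh] S_hom] mul_scale_left[OF Nh S_hom] NS
      scale_zero_right[OF z44] IH' by simp
  have R: "pa_mul A S (T' - pa_scale A c N) = S"
    unfolding mul_diff_right[OF S_hom T'h hom_scale[OF Nh]] mul_scale_right[OF S_hom Nh] SN
      scale_zero_right[OF z44] IH' by simp
  show ?thesis using L R main unfolding I_def by simp
qed

end


context planar_S begin

lemma jw4_S: "pa_mul A (jw A 4) S = S \<and> pa_mul A S (jw A 4) = S"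
proof -
  have b: "pa_tens A (jw A (Suc 0)) (pa_id A (3 - 0)) = pa_id A 4"
    using tens_id[of 1 3] by (simp add: X_def)
  have s0: "pa_mul A (pa_tens A (jw A (Suc 0)) (pa_id A (3 - 0))) S = S \<and> pa_mul A S (pa_tens A (jw A (Suc 0)) (pa_id A (3 - 0))) = S"
    unfolding b using id_left[OF S_hom] id_right[OF S_hom] by simp
  have s1: "pa_mul A (pa_tens A (jw A 2) (pa_id A 2)) S = S \<and> pa_mul A S (pa_tens A (jw A 2) (pa_id A 2)) = S"
    using jw_step[of 0] s0 by (simp add: numeral_eq_Suc)
  have s2: "pa_mul A (pa_tens A (jw A 3) (pa_id A 1)) S = S \<and> pa_mul A S (pa_tens A (jw A 3) (pa_id A 1)) = S"
    using jw_step[of 1] s1 by (simp add: numeral_eq_Suc)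
  have s3: "pa_mul A (pa_tens A (jw A 4) (pa_id A 0)) S = S \<and> pa_mul A S (pa_tens A (jw A 4) (pa_id A 0)) = S"
    using jw_step[of 2] s2 by (simp add: numeral_eq_Suc)
  show ?thesis using s3 tens_unit_right[OF jw_hom, of 4] by simp
qed


end


context planar_S begin

lemma scale_add_l: "a \<in> pa_hom A m n \<Longrightarrow> pa_scale A r a + pa_scale A s a = pa_scale A (r + s) a"
  by (simp add: scale_add_left)

lemma scale_uminus: assumes a: "a \<in> pa_hom A m n" shows "pa_scale A (- r) a = - pa_scale A r a"
  using scale_diff_left[OF a, of 0 r] scale_zero[OF a] by simp

lemma P4_hom: "P4 A S \<in> pa_hom A 4 4"
  unfolding P4_def by (rule diff_hom[OF hom_scale[OF jw_hom] hom_scale[OF S_hom]])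

lemma part12:
  "(pa_mul A (P4 A S) S = pa_scale A (-2) (P4 A S) \<and> pa_mul A S (P4 A S) = pa_scale A (-2) (P4 A S)) \<and>
   (pa_mul A (Q4 A S) S = pa_scale A 3 (Q4 A S) \<and> pa_mul A S (Q4 A S) = pa_scale A 3 (Q4 A S))"
proof -
  define f where "f = jw A 4"
  have fh: "f \<in> pa_hom A 4 4" unfolding f_def by (rule jw_hom)
  have fS: "pa_mul A f S = S" and Sf: "pa_mul A S f = S" using jw4_S unfolding f_def by auto
  have SS: "pa_mul A S S = pa_scale A 6 f + S" using S_square unfolding f_def .
  have sSS: "\<And>r. pa_scale A r (pa_mul A S S) = pa_scale A (r*6) f + pa_scale A r S"
    unfolding SS scale_add_right[OF hom_scale[OF fh] S_hom] scale_scale[OF fh] ..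
  have P4e: "P4 A S = pa_scale A (3/5) f - pa_scale A (1/5) S" unfolding P4_def f_def ..
  have Q4e: "Q4 A S = pa_scale A (2/5) f + pa_scale A (1/5) S" unfolding Q4_def f_def ..
  have sf: "\<And>r s. pa_scale A r f + pa_scale A s f = pa_scale A (r + s) f" by (rule scale_add_l[OF fh])
  have sS: "\<And>r s. pa_scale A r S + pa_scale A s S = pa_scale A (r + s) S" by (rule scale_add_l[OF S_hom])
  have nf: "\<And>r. - pa_scale A r f = pa_scale A (-r) f" using scale_uminus[OF fh] by simp
  have nS: "\<And>r. - pa_scale A r S = pa_scale A (-r) S" using scale_uminus[OF S_hom] by simp
  have P4S: "pa_mul A (P4 A S) S = pa_scale A (3/5) S - (pa_scale A (6/5) f + pa_scale A (1/5) S)"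
    unfolding P4e mul_diff_left[OF hom_scale[OF fh] hom_scale[OF S_hom] S_hom]
      mul_scale_left[OF fh S_hom] mul_scale_left[OF S_hom S_hom] fS sSS by simp
  have SP4: "pa_mul A S (P4 A S) = pa_scale A (3/5) S - (pa_scale A (6/5) f + pa_scale A (1/5) S)"
    unfolding P4e mul_diff_right[OF S_hom hom_scale[OF fh] hom_scale[OF S_hom]]
      mul_scale_right[OF S_hom fh] mul_scale_right[OF S_hom S_hom] Sf sSS by simp
  have Q4S: "pa_mul A (Q4 A S) S = pa_scale A (2/5) S + (pa_scale A (6/5) f + pa_scale A (1/5) S)"
    unfolding Q4e mul_add_left[OF hom_scale[OF fh] hom_scale[OF S_hom] S_hom]
      mul_scale_left[OF fh S_hom] mul_scale_left[OF S_hom S_hom] fS sSS by simp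
  have SQ4: "pa_mul A S (Q4 A S) = pa_scale A (2/5) S + (pa_scale A (6/5) f + pa_scale A (1/5) S)"
    unfolding Q4e mul_add_right[OF S_hom hom_scale[OF fh] hom_scale[OF S_hom]]
      mul_scale_right[OF S_hom fh] mul_scale_right[OF S_hom S_hom] Sf sSS by simp
  have P4R: "pa_scale A (-2) (P4 A S) = pa_scale A (-6/5) f + pa_scale A (2/5) S"
  proof -
    have "pa_scale A (-2) (P4 A S) = pa_scale A (-2 * (3/5)) f - pa_scale A (-2 * (1/5)) S"
      unfolding P4e scale_diff_right[OF hom_scale[OF fh] hom_scale[OF S_hom]] scale_scale[OF fh]
        scale_scale[OF S_hom] ..
    also have "\<dots> = pa_scale A (-6/5) f + pa_scale A (2/5) S"
      using nS[of "-2/5"] by simp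
    finally show ?thesis .
  qed
  have P4L: "pa_scale A (3/5) S - (pa_scale A (6/5) f + pa_scale A (1/5) S) = pa_scale A (-6/5) f + pa_scale A (2/5) S"
  proof -
    have "pa_scale A (3/5) S = pa_scale A (2/5) S + pa_scale A (1/5) S" using sS[of "2/5" "1/5"] by simp
    then show ?thesis using scale_uminus[OF fh, of "6/5"] by (simp add: algebra_simps)
  qed
  have Q4R: "pa_scale A 3 (Q4 A S) = pa_scale A (6/5) f + pa_scale A (3/5) S"
    unfolding Q4e scale_add_right[OF hom_scale[OF fh] hom_scale[OF S_hom]] scale_scale[OF fh]
        scale_scale[OF S_hom] by simp
  have Q4L: "pa_scale A (2/5) S + (pa_scale A (6/5) f + pa_scale A (1/5) S) = pa_scale A (6/5) f + pa_scale A (3/5) S"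
  proof -
    have "pa_scale A (3/5) S = pa_scale A (2/5) S + pa_scale A (1/5) S" using sS[of "2/5" "1/5"] by simp
    then show ?thesis by (simp add: algebra_simps)
  qed
  show ?thesis using P4S SP4 Q4S SQ4 P4R P4L Q4R Q4L by simp
qed

lemma ext_lemma:
  assumes U: "U \<in> pa_hom A n n" and E: "E \<in> pa_hom A n n" and Y: "Y \<in> pa_hom A n n"
    and UY: "pa_mul A U Y = pa_scale A r U" and YU: "pa_mul A Y U = pa_scale A r U"
  shows "pa_mul A (U - pa_scale A c (pa_mul A (pa_mul A U E) U)) Y = pa_scale A r (U - pa_scale A c (pa_mul A (pa_mul A U E) U)) \<and>
         pa_mul A Y (U - pa_scale A c (pa_mul A (pa_mul A U E) U)) = pa_scale A r (U - pa_scale A c (pa_mul A (pa_mul A U E) U))"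
proof -
  define M where "M = pa_mul A (pa_mul A U E) U"
  have UE: "pa_mul A U E \<in> pa_hom A n n" by (rule mul_hom[OF U E])
  have Mh: "M \<in> pa_hom A n n" unfolding M_def by (rule mul_hom[OF UE U])
  have MY: "pa_mul A M Y = pa_scale A r M"
    unfolding M_def mul_assoc[OF UE U Y] UY mul_scale_right[OF UE U] ..
  have YM: "pa_mul A Y M = pa_scale A r M"
  proof -
    have "pa_mul A Y M = pa_mul A (pa_mul A Y (pa_mul A U E)) U"
      unfolding M_def by (rule mul_assoc[OF Y UE U, symmetric])
    also have "pa_mul A Y (pa_mul A U E) = pa_mul A (pa_mul A Y U) E" by (rule mul_assoc[OF Y U E, symmetric])
    also have "\<dots> = pa_scale A r (pa_mul A U E)" unfolding YU by (rule mul_scale_left[OF U E])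
    also have "pa_mul A (pa_scale A r (pa_mul A U E)) U = pa_scale A r M"
      unfolding M_def by (rule mul_scale_left[OF UE U])
    finally show ?thesis .
  qed
  have R: "pa_scale A r (U - pa_scale A c M) = pa_scale A r U - pa_scale A c (pa_scale A r M)"
    unfolding scale_diff_right[OF U hom_scale[OF Mh]] scale_comm[OF Mh] ..
  have 1: "pa_mul A (U - pa_scale A c M) Y = pa_scale A r (U - pa_scale A c M)"
    unfolding R mul_diff_left[OF U hom_scale[OF Mh] Y] mul_scale_left[OF Mh Y] MY UY ..
  have 2: "pa_mul A Y (U - pa_scale A c M) = pa_scale A r (U - pa_scale A c M)"
    unfolding R mul_diff_right[OF Y U hom_scale[OF Mh]] mul_scale_right[OF Y Mh] YM YU ..
  show ?thesis using 1 2 unfolding M_def by simp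
qed

lemma tensX:
  assumes P: "P \<in> pa_hom A n n" and Y: "Y \<in> pa_hom A n n"
    and PY: "pa_mul A P Y = pa_scale A r P" and YP: "pa_mul A Y P = pa_scale A r P"
  shows "pa_mul A (pa_tens A P (X A)) (pa_tens A Y (X A)) = pa_scale A r (pa_tens A P (X A)) \<and>
         pa_mul A (pa_tens A Y (X A)) (pa_tens A P (X A)) = pa_scale A r (pa_tens A P (X A))"
proof -
  have XX: "pa_mul A (X A) (X A) = X A" using id_left[OF X_hom] by (simp add: X_def)
  show ?thesis
    unfolding interchange[OF P Y X_hom X_hom] interchange[OF Y P X_hom X_hom] XX PY YP
      tens_scale_left[OF P X_hom] by simp
qed

lemma part34:
  "(pa_mul A (P5 A S) (pa_tens A S (X A)) = pa_scale A (-2) (P5 A S) \<and>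
    pa_mul A (pa_tens A S (X A)) (P5 A S) = pa_scale A (-2) (P5 A S)) \<and>
   (pa_mul A (P6 A S) (pa_tens A S (pa_tens A (X A) (X A))) = pa_scale A (-2) (P6 A S) \<and>
    pa_mul A (pa_tens A S (pa_tens A (X A) (X A))) (P6 A S) = pa_scale A (-2) (P6 A S))"
proof -
  have p4: "pa_mul A (P4 A S) S = pa_scale A (-2) (P4 A S)" "pa_mul A S (P4 A S) = pa_scale A (-2) (P4 A S)"
    using part12 by auto
  have U5: "pa_tens A (P4 A S) (X A) \<in> pa_hom A 5 5" using tens_hom[OF P4_hom X_hom] by simp
  have SX: "pa_tens A S (X A) \<in> pa_hom A 5 5" using tens_hom[OF S_hom X_hom] by simp
  have E5: "e A 5 4 \<in> pa_hom A 5 5" by (rule e_hom) auto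
  note t5 = tensX[OF P4_hom S_hom p4]
  have r5: "pa_mul A (P5 A S) (pa_tens A S (X A)) = pa_scale A (-2) (P5 A S) \<and>
    pa_mul A (pa_tens A S (X A)) (P5 A S) = pa_scale A (-2) (P5 A S)"
    unfolding P5_def using ext_lemma[OF U5 E5 SX conjunct1[OF t5] conjunct2[OF t5]] .
  have P5h: "P5 A S \<in> pa_hom A 5 5" unfolding P5_def
    by (rule diff_hom[OF U5 hom_scale[OF mul_hom[OF mul_hom[OF U5 E5] U5]]])
  have U6: "pa_tens A (P5 A S) (X A) \<in> pa_hom A 6 6" using tens_hom[OF P5h X_hom] by simp
  have SXX: "pa_tens A (pa_tens A S (X A)) (X A) \<in> pa_hom A 6 6" using tens_hom[OF SX X_hom] by simp
  have E6: "e A 6 5 \<in> pa_hom A 6 6" by (rule e_hom) auto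
  have assoc: "pa_tens A S (pa_tens A (X A) (X A)) = pa_tens A (pa_tens A S (X A)) (X A)"
    by (rule tens_assoc[OF S_hom X_hom X_hom, symmetric])
  note t6 = tensX[OF P5h SX conjunct1[OF r5] conjunct2[OF r5]]
  have r6: "pa_mul A (P6 A S) (pa_tens A S (pa_tens A (X A) (X A))) = pa_scale A (-2) (P6 A S) \<and>
    pa_mul A (pa_tens A S (pa_tens A (X A) (X A))) (P6 A S) = pa_scale A (-2) (P6 A S)"
    unfolding P6_def assoc using ext_lemma[OF U6 E6 SXX conjunct1[OF t6] conjunct2[OF t6]] .
  show ?thesis using r5 r6 by simp
qed

end

theorem lemma4p75:
  fixes A :: "'m::ab_group_add pa_ops" and S :: 'm
  assumes "planar_S A S"
  shows "(pa_mul A (P4 A S) S = pa_scale A (-2) (P4 A S) \<and> pa_mul A S (P4 A S) = pa_scale A (-2) (P4 A S)) \<and>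
         (pa_mul A (Q4 A S) S = pa_scale A 3 (Q4 A S) \<and> pa_mul A S (Q4 A S) = pa_scale A 3 (Q4 A S)) \<and>
         (pa_mul A (P5 A S) (pa_tens A S (X A)) = pa_scale A (-2) (P5 A S) \<and>
         pa_mul A (pa_tens A S (X A)) (P5 A S) = pa_scale A (-2) (P5 A S)) \<and>
         (pa_mul A (P6 A S) (pa_tens A S (pa_tens A (X A) (X A))) = pa_scale A (-2) (P6 A S) \<and>
         pa_mul A (pa_tens A S (pa_tens A (X A) (X A))) (P6 A S) = pa_scale A (-2) (P6 A S))"
  using planar_S.part12[OF assms] planar_S.part34[OF assms] by blast

end
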